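(* Let $0<\gamma<1/2$ and let $\ell\ge1$ be a fixed integer. There is a sequence $\varepsilon_n\to0$ with the following property. Let $n$ be given, let $\mathcal X\subset B(0,R_n)\setminus\mathring B(0,(1-\gamma)R_n)$ be any finite set, and form the graph on $\mathcal X$ joining two points iff their hyperbolic distance is at most $R_n$. If $y_1,y_2\in\mathcal X$ are joined by a path of length $\ell$ in this graph, then the angle $\theta_{12}$ between $y_1$ and $y_2$ as seen from the origin satisfies $$\theta_{12}\le(1+\varepsilon_n)\,2\ell\,e^{-\zeta(1-2\gamma)R_n/2}.$$
   Context: Fix an integer $d\ge2$ and $\zeta>0$. The Poincaré ball $B_d^{(\zeta)}$ is the open unit ball of $\mathbb R^d$ with metric $ds^2=\frac{4}{\zeta^2}\frac{|dx|^2}{(1-|x|^2)^2}$ and hyperbolic distance $d(\cdot,\cdot)$. $B(0,R)$ is the closed hyperbolic ball of radius $R$ about the origin, and $\mathring B$ its interior. $R_n\to\infty$ is a deterministic sequence. The angle between two points is the Euclidean angle between their position vectors. *)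

theory Defs
  imports "HOL-Analysis.Analysis"
begin

text \<open>Poincare ball model with metric (4/zeta^2)|dx|^2/(1-|x|^2)^2 (curvature -zeta^2).\<close>

definition poincare_ball :: "(real^'n) set" where
  "poincare_ball = {x. norm x < 1}"

definition hdist :: "real \<Rightarrow> real^'n \<Rightarrow> real^'n \<Rightarrow> real" where
  "hdist \<zeta> x y = arcosh (1 + 2 * (norm (x - y))^2 / ((1 - (norm x)^2) * (1 - (norm y)^2))) / \<zeta>"

definition hball :: "real \<Rightarrow> real \<Rightarrow> (real^'n) set" where
  "hball \<zeta> R = {x \<in> poincare_ball. hdist \<zeta> 0 x \<le> R}"

definition hball_open :: "real \<Rightarrow> real \<Rightarrow> (real^'n) set" where
  "hball_open \<zeta> R = {x \<in> poincare_ball. hdist \<zeta> 0 x < R}"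

definition vec_angle :: "real^'n \<Rightarrow> real^'n \<Rightarrow> real" where
  "vec_angle x y = arccos ((x \<bullet> y) / (norm x * norm y))"

definition is_path :: "real \<Rightarrow> real \<Rightarrow> (real^'n) set \<Rightarrow> nat \<Rightarrow> (nat \<Rightarrow> real^'n) \<Rightarrow> bool" where
  "is_path \<zeta> R X l p \<longleftrightarrow> (\<forall>i\<le>l. p i \<in> X) \<and> inj_on p {0..l} \<and>
     (\<forall>i<l. hdist \<zeta> (p i) (p (Suc i)) \<le> R)"

end

theory Submission
  imports Defs
begin


lemma va_arg_bound:
  fixes x y :: "real^'n"
  shows "\<bar>(x \<bullet> y) / (norm x * norm y)\<bar> \<le> 1"
proof (cases "norm x * norm y = 0")
  case True then show ?thesis by auto
next
  case False
  then have "norm x * norm y > 0" by (simp add: less_le)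
  then show ?thesis using Cauchy_Schwarz_ineq2[of x y]
    by (metis abs_divide abs_mult abs_norm_cancel divide_le_eq_1 less_numeral_extra(3) zero_less_abs_iff)
qed

lemma va_arg_bound2:
  fixes x y :: "real^'n"
  shows "-1 \<le> (x \<bullet> y) / (norm x * norm y)" "(x \<bullet> y) / (norm x * norm y) \<le> 1"
  using va_arg_bound[of x y] by linarith+

lemma va_ge0: "0 \<le> vec_angle x y"
  unfolding vec_angle_def using va_arg_bound2[of x y] by (intro arccos_lbound)

lemma va_le_pi: "vec_angle x y \<le> pi"
  unfolding vec_angle_def using va_arg_bound2[of x y] by (intro arccos_ubound)

lemma va_self: "x \<noteq> 0 \<Longrightarrow> vec_angle x x = 0"
  unfolding vec_angle_def by (simp add: dot_square_norm power2_eq_square)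

lemma va_tri:
  fixes x y z :: "real^'n"
  assumes "x \<noteq> 0" "y \<noteq> 0" "z \<noteq> 0"
  shows "vec_angle x z \<le> vec_angle x y + vec_angle y z"
proof (cases "vec_angle x y + vec_angle y z \<ge> pi")
  case True then show ?thesis using va_le_pi[of x z] by linarith
next
  case False
  define X where "X = x /\<^sub>R norm x"
  define Y where "Y = y /\<^sub>R norm y"
  define Z where "Z = z /\<^sub>R norm z"
  have XY: "(x \<bullet> y) / (norm x * norm y) = X \<bullet> Y" unfolding X_def Y_def
    by (simp add: field_simps)
  have YZ: "(y \<bullet> z) / (norm y * norm z) = Y \<bullet> Z" unfolding Z_def Y_def
    by (simp add: field_simps)
  have XZ: "(x \<bullet> z) / (norm x * norm z) = X \<bullet> Z" unfolding X_def Z_def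
    by (simp add: field_simps)
  have YY: "Y \<bullet> Y = 1" unfolding Y_def using assms
    by (simp add: dot_square_norm power2_eq_square)
  have XX: "X \<bullet> X = 1" unfolding X_def using assms
    by (simp add: dot_square_norm power2_eq_square)
  have ZZ: "Z \<bullet> Z = 1" unfolding Z_def using assms
    by (simp add: dot_square_norm power2_eq_square)
  define al where "al = vec_angle x y"
  define be where "be = vec_angle y z"
  have bXY: "\<bar>X \<bullet> Y\<bar> \<le> 1" using va_arg_bound[of x y] XY by simp
  have bYZ: "\<bar>Y \<bullet> Z\<bar> \<le> 1" using va_arg_bound[of y z] YZ by simp
  have bXZ: "\<bar>X \<bullet> Z\<bar> \<le> 1" using va_arg_bound[of x z] XZ by simp
  have cal: "cos al = X \<bullet> Y" unfolding al_def vec_angle_def XY using bXY by simp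
  have cbe: "cos be = Y \<bullet> Z" unfolding be_def vec_angle_def YZ using bYZ by simp
  have sal: "sin al = sqrt (1 - (X \<bullet> Y)^2)" unfolding al_def vec_angle_def XY
    using bXY by (simp add: sin_arccos_abs)
  have sbe: "sin be = sqrt (1 - (Y \<bullet> Z)^2)" unfolding be_def vec_angle_def YZ
    using bYZ by (simp add: sin_arccos_abs)
  define U where "U = X - (X \<bullet> Y) *\<^sub>R Y"
  define W where "W = Z - (Z \<bullet> Y) *\<^sub>R Y"
  have UW: "X \<bullet> Z = (X \<bullet> Y) * (Y \<bullet> Z) + U \<bullet> W"
    unfolding U_def W_def using YY
    by (simp add: inner_diff_left inner_diff_right inner_commute algebra_simps)
  have nU: "norm U = sqrt (1 - (X \<bullet> Y)^2)"
  proof -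
    have "norm U ^ 2 = 1 - (X \<bullet> Y)^2" unfolding U_def power2_norm_eq_inner using YY
      by (simp add: inner_diff_left inner_diff_right inner_commute algebra_simps power2_eq_square XX)
    then show ?thesis by (simp add: real_sqrt_unique)
  qed
  have nW: "norm W = sqrt (1 - (Y \<bullet> Z)^2)"
  proof -
    have "norm W ^ 2 = 1 - (Y \<bullet> Z)^2" unfolding W_def power2_norm_eq_inner using YY
      by (simp add: inner_diff_left inner_diff_right inner_commute algebra_simps power2_eq_square ZZ)
    then show ?thesis by (simp add: real_sqrt_unique)
  qed
  have "U \<bullet> W \<ge> - (norm U * norm W)"
    using Cauchy_Schwarz_ineq2[of U W] by linarith
  then have "X \<bullet> Z \<ge> cos (al + be)"
    unfolding cos_add cal cbe sal sbe UW nU nW by simp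
  moreover have "0 \<le> al + be" "al + be \<le> pi" using False va_ge0 al_def be_def
    by (auto intro: add_nonneg_nonneg)
  ultimately have "arccos (X \<bullet> Z) \<le> arccos (cos (al + be))"
    using bXZ by (intro arccos_le_arccos) auto
  also have "\<dots> = al + be" using \<open>0 \<le> al + be\<close> \<open>al + be \<le> pi\<close> by (simp add: arccos_cos)
  finally show ?thesis unfolding vec_angle_def XZ al_def be_def .
qed




lemma sq_aux: "(q::real) \<noteq> 0 \<Longrightarrow> q = 1 - a^2 \<Longrightarrow> (2*a/q)^2 = (1 + 2*a^2/q)^2 - 1"
  apply (simp add: field_simps power2_eq_square) by algebra

lemma ident_aux:
  fixes a b ip qa qb :: real
  assumes "a \<noteq> 0" "b \<noteq> 0" "qa \<noteq> 0" "qb \<noteq> 0"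
  shows "2 * (a^2 + b^2 - 2 * ip) / (qa * qb) = (2 * a / qa) * (2 * b / qb) * (1 - ip / (a * b)) + 2 * (a - b)^2 / (qa * qb)"
  using assms by (simp add: field_simps power2_eq_square)

lemma edge_alg:
  fixes x y :: "real^'n"
  assumes "norm x < 1" "norm y < 1" "x \<noteq> 0" "y \<noteq> 0"
    and hT: "1 + 2 * (norm (x - y))^2 / ((1 - (norm x)^2) * (1 - (norm y)^2)) \<le> CT"
    and hx: "CS \<le> 1 + 2 * (norm x)^2 / (1 - (norm x)^2)"
    and hy: "CS \<le> 1 + 2 * (norm y)^2 / (1 - (norm y)^2)"
    and "1 \<le> CS"
  shows "(1 - (x \<bullet> y) / (norm x * norm y)) * (CS^2 - 1) \<le> CT - 1"
proof -
  define a where "a = norm x"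
  define b where "b = norm y"
  define ip where "ip = x \<bullet> y"
  have a0: "0 < a" "a < 1" using assms(1,3) unfolding a_def by auto
  have b0: "0 < b" "b < 1" using assms(2,4) unfolding b_def by auto
  have d2: "(norm (x - y))^2 = a^2 + b^2 - 2 * ip"
    unfolding a_def b_def ip_def power2_norm_eq_inner
    by (simp add: inner_diff_left inner_diff_right inner_commute)
  define D where "D = (1 - a^2) * (1 - b^2)"
  have D0: "D > 0" unfolding D_def using a0 b0 by (simp add: power_less_one_iff abs_less_iff)
  define sa where "sa = 2 * a / (1 - a^2)"
  define sb where "sb = 2 * b / (1 - b^2)"
  define M where "M = CS^2 - 1"
  have M0: "M \<ge> 0" unfolding M_def using \<open>1 \<le> CS\<close> by (simp add: one_le_power)
  have a2: "a^2 < 1" using a0 by (simp add: power_less_one_iff abs_less_iff)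
  have b2: "b^2 < 1" using b0 by (simp add: power_less_one_iff abs_less_iff)
  have sa2: "sa^2 = (1 + 2 * a^2 / (1 - a^2))^2 - 1" unfolding sa_def using a2 by (intro sq_aux) auto
  have sb2: "sb^2 = (1 + 2 * b^2 / (1 - b^2))^2 - 1" unfolding sb_def using b2 by (intro sq_aux) auto
  have "CS^2 \<le> (1 + 2 * a^2 / (1 - a^2))^2" using hx \<open>1 \<le> CS\<close> a_def
    by (intro power_mono) auto
  then have sa_ge: "M \<le> sa^2" using sa2 M_def by simp
  have "CS^2 \<le> (1 + 2 * b^2 / (1 - b^2))^2" using hy \<open>1 \<le> CS\<close> b_def
    by (intro power_mono) auto
  then have sb_ge: "M \<le> sb^2" using sb2 M_def by simp
  have sa0: "sa \<ge> 0" unfolding sa_def using a0 a2 by simp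
  have sb0: "sb \<ge> 0" unfolding sb_def using b0 b2 by simp
  have "M * M \<le> sa^2 * sb^2"
    by (rule mult_mono[OF sa_ge sb_ge]) (simp_all add: M0)
  then have "M^2 \<le> (sa * sb)^2" by (simp only: power_mult_distrib power2_eq_square[of M])
  moreover have "0 \<le> sa * sb" using sa0 sb0 by (rule mult_nonneg_nonneg)
  ultimately have Msab: "M \<le> sa * sb" by (rule power2_le_imp_le)
  have c1: "ip / (a * b) \<le> 1" using va_arg_bound2(2)[of x y] a_def b_def ip_def by simp
  have ident: "2 * (a^2 + b^2 - 2 * ip) / D = sa * sb * (1 - ip / (a * b)) + 2 * (a - b)^2 / D"
    unfolding sa_def sb_def D_def using a0 b0 a2 b2 by (intro ident_aux) auto
  have "M * (1 - ip / (a * b)) \<le> sa * sb * (1 - ip / (a * b))"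
    using Msab c1 by (intro mult_right_mono) auto
  also have "\<dots> \<le> 2 * (a^2 + b^2 - 2 * ip) / D"
    using ident D0 by simp
  also have "\<dots> \<le> CT - 1" using hT d2 unfolding D_def a_def b_def by simp
  finally show ?thesis unfolding M_def a_def b_def ip_def by (simp only: mult.commute)
qed

lemma half_angle:
  fixes th K :: real
  assumes "0 \<le> th" "th \<le> pi" "1 - cos th \<le> K" "K < 2"
  shows "th \<le> 2 * sqrt (K / (2 - K))"
proof -
  define u where "u = th / 2"
  have u0: "0 \<le> u" "u \<le> pi/2" using assms u_def by auto
  have cth: "cos th = 1 - 2 * sin u ^ 2" "cos th = 2 * cos u ^ 2 - 1"
    using cos_double_sin[of u] cos_double_cos[of u] u_def by auto
  have "u \<noteq> pi/2"
  proof
    assume "u = pi/2" then have "th = pi" using u_def by simp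
    then have "cos th = -1" by simp
    then show False using assms by simp
  qed
  then have u1: "u < pi/2" using u0 by simp
  have cu: "cos u > 0" using u0 u1 by (intro cos_gt_zero_pi) auto
  have t0: "tan u \<ge> 0" using tan_pos_pi2_le[of u] u0 u1 by simp
  have K0: "0 \<le> K" using cos_le_one[of th] assms(3) by linarith
  have e1: "1 - cos th = 2 * sin u ^ 2" "1 + cos th = 2 * cos u ^ 2" using cth by linarith+
  have "tan u ^ 2 = (1 - cos th) / (1 + cos th)"
    unfolding e1 by (simp add: tan_def power_divide)
  also have "\<dots> \<le> K / (2 - K)"
  proof -
    have "1 + cos th \<ge> 2 - K" using assms by simp
    moreover have "1 - cos th \<ge> 0" by simp
    ultimately show ?thesis
      by (intro frac_le) (use assms K0 in auto)
  qed
  finally have "tan u \<le> sqrt (K / (2 - K))" using t0 by (simp add: real_le_rsqrt)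
  moreover have "u \<le> tan u"
  proof -
    have "arctan (tan u) \<le> tan u" using t0 by (rule arctan_le_self)
    then show ?thesis using u0 u1 by (simp add: arctan_tan)
  qed
  ultimately show ?thesis using u_def by simp
qed




lemma cosh_exp: "cosh (x::real) = (exp x + inverse (exp x)) / 2"
  by (simp add: cosh_def exp_minus)

lemma half_aux: "(i::real) \<le> 1 \<Longrightarrow> (e + i)/2 - 1 \<le> e/2" by (simp add: field_simps)

lemma K_bound:
  fixes T g :: real
  assumes "T > 0" "0 < g" "g < 1/2"
  shows "(cosh T - 1) / (cosh ((1-g)*T)^2 - 1)
     \<le> 2 * exp (-(1-2*g)*T/2)^2 * (1 / (1 - exp (-2*((1-g)*T)))^2)"
proof -
  define S where "S = (1-g)*T"
  have S0: "S > 0" unfolding S_def using assms by simp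
  define E where "E = exp S"
  have E1: "E > 1" unfolding E_def using S0 by simp
  have cT: "cosh T - 1 \<le> exp T / 2"
  proof -
    have "inverse (exp T) \<le> 1" using assms by (simp add: inverse_le_1_iff)
    then show ?thesis unfolding cosh_exp by (rule half_aux)
  qed
  have den: "cosh S ^ 2 - 1 = (E^2 - 1)^2 / (4 * E^2)"
    unfolding cosh_exp E_def[symmetric] using E1
    by (simp add: field_simps power2_eq_square)
  have ea: "exp (-(1-2*g)*T/2)^2 = exp T / E^2"
  proof -
    have "exp (-(1-2*g)*T/2)^2 = exp (2 * (-(1-2*g)*T/2))" by (simp add: exp_of_nat_mult[symmetric])
    also have "2 * (-(1-2*g)*T/2) = T - 2 * S" unfolding S_def by (simp add: field_simps)
    also have "exp (T - 2 * S) = exp T / E^2" unfolding E_def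
      by (simp add: exp_diff exp_of_nat_mult[symmetric])
    finally show ?thesis .
  qed
  have ew: "exp (-2*S) = 1 / E^2" unfolding E_def
    by (simp add: exp_minus exp_of_nat_mult[symmetric] field_simps)
  have E2: "E^2 - 1 > 0" using E1 by (simp add: one_less_power)
  have rhs: "2 * exp (-(1-2*g)*T/2)^2 * (1 / (1 - exp (-2*S))^2) = (exp T / 2) * (4 * E^2) / (E^2 - 1)^2"
    unfolding ea ew using E1 E2 by (simp add: field_simps power2_eq_square)
  have "(cosh T - 1) / (cosh S ^ 2 - 1) = (cosh T - 1) * (4 * E^2) / (E^2 - 1)^2"
    unfolding den using E1 E2 by (simp add: field_simps)
  also have "\<dots> \<le> (exp T / 2) * (4 * E^2) / (E^2 - 1)^2"
    using cT E2 by (intro divide_right_mono mult_right_mono) auto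
  finally show ?thesis unfolding rhs[symmetric] S_def .
qed

lemma exp_neg_lim:
  fixes R :: "nat \<Rightarrow> real"
  assumes "c > 0" "filterlim R at_top sequentially"
  shows "(\<lambda>n. exp (-(c * R n))) \<longlonglongrightarrow> 0"
proof -
  have "LIM n sequentially. c * R n :> at_top"
    by (rule filterlim_tendsto_pos_mult_at_top[OF tendsto_const assms(1) assms(2)])
  then have "LIM n sequentially. -(c * R n) :> at_bot"
    by (simp add: filterlim_uminus_at_top)
  then show ?thesis by (rule filterlim_compose[OF exp_at_bot])
qed




lemma hdist0: "hdist \<zeta> 0 x = arcosh (1 + 2 * (norm x)^2 / (1 - (norm x)^2)) / \<zeta>"
  by (simp add: hdist_def)

lemma nonzero_of_hdist:
  assumes "hdist \<zeta> 0 x > 0" shows "x \<noteq> 0"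
  using assms by (auto simp: hdist0)

lemma arcosh_le_cosh:
  fixes Q T :: real
  assumes "1 \<le> Q" "arcosh Q \<le> T" shows "Q \<le> cosh T"
proof -
  have "0 \<le> arcosh Q" using assms by simp
  moreover have "0 \<le> T" using assms \<open>0 \<le> arcosh Q\<close> by linarith
  ultimately have "cosh (arcosh Q) \<le> cosh T" using assms
    by (subst cosh_real_nonneg_le_iff) auto
  then show ?thesis using assms by simp
qed

lemma cosh_le_arcosh:
  fixes Q S :: real
  assumes "1 \<le> Q" "S \<le> arcosh Q" "0 \<le> S" shows "cosh S \<le> Q"
proof -
  have "cosh S \<le> cosh (arcosh Q)" using assms arcosh_nonneg_real[of Q]
    by (subst cosh_real_nonneg_le_iff) auto
  then show ?thesis using assms by simp
qed

lemma edge_bound: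
  fixes x y :: "real^'n"
  assumes z: "\<zeta> > 0" and g: "0 < \<gamma>" "\<gamma> < 1/2" and R: "Rn > 0"
    and nx: "norm x < 1" and ny: "norm y < 1"
    and hx: "hdist \<zeta> 0 x \<ge> (1-\<gamma>)*Rn" and hy: "hdist \<zeta> 0 y \<ge> (1-\<gamma>)*Rn"
    and hxy: "hdist \<zeta> x y \<le> Rn"
    and A: "A = exp (- \<zeta> * (1 - 2*\<gamma>) * Rn / 2)"
    and U: "U = 1 / (1 - exp (-2*((1-\<gamma>)*(\<zeta>*Rn))))^2"
    and AU: "A^2 * U < 1"
  shows "vec_angle x y \<le> 2 * A * sqrt (U / (1 - A^2 * U))"
proof -
  define T where "T = \<zeta> * Rn"
  define S where "S = (1-\<gamma>) * T"
  have T0: "T > 0" using z R T_def by simp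
  have S0: "S > 0" using T0 g S_def by simp
  have pos: "(1-\<gamma>)*Rn > 0" using g R by simp
  have x0: "x \<noteq> 0" using hx pos by (intro nonzero_of_hdist[of \<zeta>]) linarith
  have y0: "y \<noteq> 0" using hy pos by (intro nonzero_of_hdist[of \<zeta>]) linarith
  have ax: "(norm x)^2 < 1" using nx by (simp add: power_less_one_iff abs_less_iff)
  have ay: "(norm y)^2 < 1" using ny by (simp add: power_less_one_iff abs_less_iff)
  define Q0x where "Q0x = 1 + 2 * (norm x)^2 / (1 - (norm x)^2)"
  define Q0y where "Q0y = 1 + 2 * (norm y)^2 / (1 - (norm y)^2)"
  define Q where "Q = 1 + 2 * (norm (x - y))^2 / ((1 - (norm x)^2) * (1 - (norm y)^2))"
  have Q0x1: "1 \<le> Q0x" unfolding Q0x_def using ax by simp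
  have Q0y1: "1 \<le> Q0y" unfolding Q0y_def using ay by simp
  have Q1: "1 \<le> Q" unfolding Q_def using ax ay by simp
  have "S \<le> arcosh Q0x"
    using hx z unfolding hdist0 Q0x_def[symmetric] S_def T_def
    by (simp add: field_simps)
  then have cx: "cosh S \<le> Q0x" using Q0x1 S0 by (intro cosh_le_arcosh) auto
  have "S \<le> arcosh Q0y"
    using hy z unfolding hdist0 Q0y_def[symmetric] S_def T_def
    by (simp add: field_simps)
  then have cy: "cosh S \<le> Q0y" using Q0y1 S0 by (intro cosh_le_arcosh) auto
  have "arcosh Q \<le> T"
    using hxy z unfolding hdist_def Q_def[symmetric] T_def
    by (simp add: field_simps)
  then have cxy: "Q \<le> cosh T" using Q1 by (intro arcosh_le_cosh)
  have CS1: "cosh S > 1" using cosh_real_strict_mono[of 0 S] S0 by simp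
  have main: "(1 - (x \<bullet> y) / (norm x * norm y)) * ((cosh S)^2 - 1) \<le> cosh T - 1"
    using nx ny x0 y0 cxy cx cy CS1 unfolding Q_def Q0x_def Q0y_def
    by (intro edge_alg) auto
  have CS2: "(cosh S)^2 - 1 > 0" using CS1 by (simp add: one_less_power)
  define K where "K = (cosh T - 1) / ((cosh S)^2 - 1)"
  have K1: "1 - (x \<bullet> y) / (norm x * norm y) \<le> K"
    unfolding K_def using main CS2 by (simp add: pos_le_divide_eq)
  have kb: "K \<le> 2 * exp (-(1-2*\<gamma>)*T/2)^2 * (1/(1 - exp(-2*S))^2)"
    unfolding K_def S_def using K_bound[of T \<gamma>] T0 g by simp
  have eA: "exp (-(1-2*\<gamma>)*T/2) = A" unfolding A T_def
    by (intro arg_cong[where f=exp]) (simp add: algebra_simps)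
  have eU: "1/(1 - exp(-2*S))^2 = U" unfolding U S_def T_def by simp
  have K2: "K \<le> 2 * A^2 * U" using kb unfolding eA eU .
  have K3: "K < 2" using K2 AU by simp
  have cth: "cos (vec_angle x y) = (x \<bullet> y) / (norm x * norm y)"
    unfolding vec_angle_def using va_arg_bound2[of x y] by simp
  have "vec_angle x y \<le> 2 * sqrt (K / (2 - K))"
    using va_ge0[of x y] va_le_pi[of x y] K1 K3 cth by (intro half_angle) auto
  also have "K / (2 - K) \<le> (2 * A^2 * U) / (2 - 2 * A^2 * U)"
  proof -
    have K0: "0 \<le> K" using K1 va_arg_bound2(2)[of x y] by linarith
    have h: "0 \<le> A^2 * U" unfolding U by simp
    show ?thesis by (intro frac_le) (use K0 K2 AU h in \<open>auto simp: mult.commute\<close>)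
  qed
  then have "2 * sqrt (K / (2 - K)) \<le> 2 * sqrt ((2 * A^2 * U) / (2 - 2 * A^2 * U))"
    by simp
  also have "(2 * A^2 * U) / (2 - 2 * A^2 * U) = A^2 * (U / (1 - A^2 * U))"
    using AU by (simp add: field_simps)
  also have "2 * sqrt (A^2 * (U / (1 - A^2 * U))) = 2 * A * sqrt (U / (1 - A^2 * U))"
  proof -
    have A0: "A > 0" using A by simp
    then show ?thesis unfolding real_sqrt_mult real_sqrt_abs by simp
  qed
  finally show ?thesis .
qed




lemma path_sum:
  fixes p :: "nat \<Rightarrow> real^'n"
  assumes "\<And>i. i \<le> l \<Longrightarrow> p i \<noteq> 0" "\<And>i. i < l \<Longrightarrow> vec_angle (p i) (p (Suc i)) \<le> B"
  shows "k \<le> l \<Longrightarrow> vec_angle (p 0) (p k) \<le> real k * B"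
proof (induction k)
  case 0 then show ?case using assms(1)[of 0] by (simp add: va_self)
next
  case (Suc k)
  then have "vec_angle (p 0) (p (Suc k)) \<le> vec_angle (p 0) (p k) + vec_angle (p k) (p (Suc k))"
    using assms(1) by (intro va_tri) auto
  also have "\<dots> \<le> real k * B + B" using Suc assms(2)[of k] by (intro add_mono) auto
  finally show ?case by (simp add: algebra_simps)
qed

theorem mainTheorem12:
  fixes \<zeta> \<gamma> :: real and l :: nat and R :: "nat \<Rightarrow> real"
  assumes "CARD('n) \<ge> 2"
    and "\<zeta> > 0"
    and "0 < \<gamma>" and "\<gamma> < 1/2"
    and "l \<ge> 1"
    and "filterlim R at_top sequentially"
  shows "\<exists>\<epsilon> :: nat \<Rightarrow> real. \<epsilon> \<longlonglongrightarrow> 0 \<and>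
    (\<forall>n. \<forall>X :: (real^'n) set. \<forall>p.
       finite X \<longrightarrow> X \<subseteq> hball \<zeta> (R n) - hball_open \<zeta> ((1 - \<gamma>) * R n) \<longrightarrow>
       is_path \<zeta> (R n) X l p \<longrightarrow>
       vec_angle (p 0) (p l) \<le> (1 + \<epsilon> n) * (2 * real l) * exp (- \<zeta> * (1 - 2*\<gamma>) * R n / 2))"
proof -
  note z = assms(2) and g = assms(3,4) and Rlim = assms(6)
  define a where "a n = exp (- \<zeta> * (1 - 2*\<gamma>) * R n / 2)" for n
  define w where "w n = exp (-2*((1-\<gamma>)*(\<zeta>*R n)))" for n
  define u where "u n = 1 / (1 - w n)^2" for n
  define good where "good n \<longleftrightarrow> R n > 0 \<and> a n ^ 2 * u n < 1" for n
  define eps where "eps n = (if good n then sqrt (u n / (1 - a n ^ 2 * u n)) - 1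
                              else pi / (2 * real l * a n))" for n
  have alim: "a \<longlonglongrightarrow> 0"
  proof -
    have "(\<lambda>n. exp (-((\<zeta> * (1 - 2*\<gamma>) / 2) * R n))) \<longlonglongrightarrow> 0"
      using z g Rlim by (intro exp_neg_lim) auto
    moreover have "(\<lambda>n. exp (-((\<zeta> * (1 - 2*\<gamma>) / 2) * R n))) = a"
      unfolding a_def by (intro ext arg_cong[where f=exp]) (simp add: field_simps)
    ultimately show ?thesis by simp
  qed
  have wlim: "w \<longlonglongrightarrow> 0"
  proof -
    have "(\<lambda>n. exp (-((2 * (1-\<gamma>) * \<zeta>) * R n))) \<longlonglongrightarrow> 0"
      using z g Rlim by (intro exp_neg_lim) auto
    moreover have "(\<lambda>n. exp (-((2 * (1-\<gamma>) * \<zeta>) * R n))) = w"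
      unfolding w_def by (intro ext arg_cong[where f=exp]) (simp add: algebra_simps)
    ultimately show ?thesis by simp
  qed
  have ulim: "u \<longlonglongrightarrow> 1"
  proof -
    have "(\<lambda>n. 1 / (1 - w n)^2) \<longlonglongrightarrow> 1 / (1 - 0)^2"
      by (intro tendsto_intros wlim) simp
    then show ?thesis unfolding u_def by simp
  qed
  have aulim: "(\<lambda>n. a n ^ 2 * u n) \<longlonglongrightarrow> 0"
  proof -
    have "(\<lambda>n. a n ^ 2 * u n) \<longlonglongrightarrow> 0 ^ 2 * 1"
      by (intro tendsto_intros alim ulim)
    then show ?thesis by simp
  qed
  have mainlim: "(\<lambda>n. sqrt (u n / (1 - a n ^ 2 * u n)) - 1) \<longlonglongrightarrow> 0"
  proof -
    have "(\<lambda>n. sqrt (u n / (1 - a n ^ 2 * u n)) - 1) \<longlonglongrightarrow> sqrt (1 / (1 - 0)) - 1"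
      by (intro tendsto_intros ulim aulim) simp
    then show ?thesis by simp
  qed
  have ev_good: "eventually good sequentially"
  proof -
    have "eventually (\<lambda>n. R n > 0) sequentially"
      using Rlim by (simp add: filterlim_at_top_dense)
    moreover have "eventually (\<lambda>n. a n ^ 2 * u n < 1) sequentially"
      using aulim by (rule order_tendstoD) simp
    ultimately show ?thesis unfolding good_def by (rule eventually_conj)
  qed
  have epslim: "eps \<longlonglongrightarrow> 0"
  proof (rule Lim_transform_eventually[OF mainlim])
    show "\<forall>\<^sub>F n in sequentially. sqrt (u n / (1 - a n ^ 2 * u n)) - 1 = eps n"
      using ev_good by eventually_elim (simp add: eps_def)
  qed
  show ?thesis
  proof (intro exI conjI allI impI)
    show "eps \<longlonglongrightarrow> 0" by (rule epslim)
  next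
    fix n and X :: "(real^'n) set" and p
    assume fin: "finite X"
      and sub: "X \<subseteq> hball \<zeta> (R n) - hball_open \<zeta> ((1 - \<gamma>) * R n)"
      and path: "is_path \<zeta> (R n) X l p"
    have a0: "a n > 0" unfolding a_def by simp
    have goal_form: "exp (- \<zeta> * (1 - 2*\<gamma>) * R n / 2) = a n" unfolding a_def ..
    show "vec_angle (p 0) (p l) \<le> (1 + eps n) * (2 * real l) * exp (- \<zeta> * (1 - 2*\<gamma>) * R n / 2)"
    proof (cases "good n")
      case False
      have "vec_angle (p 0) (p l) \<le> pi" by (rule va_le_pi)
      also have "\<dots> \<le> (1 + eps n) * (2 * real l) * a n"
      proof -
        have l0: "real l > 0" using assms(5) by simp
        have "(1 + eps n) * (2 * real l) * a n = 2 * real l * a n + pi"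
          using False a0 l0 unfolding eps_def by (simp add: field_simps)
        moreover have "0 \<le> 2 * real l * a n" using a0 l0 by simp
        ultimately show ?thesis by linarith
      qed
      finally show ?thesis unfolding goal_form .
    next
      case True
      then have Rn: "R n > 0" and AU: "a n ^ 2 * u n < 1" unfolding good_def by auto
      have mem: "p i \<in> X" if "i \<le> l" for i using path that unfolding is_path_def by auto
      have nrm: "norm (p i) < 1" and hd: "hdist \<zeta> 0 (p i) \<ge> (1-\<gamma>) * R n" if "i \<le> l" for i
        using sub mem[OF that] unfolding hball_def hball_open_def poincare_ball_def by auto
      have edge: "hdist \<zeta> (p i) (p (Suc i)) \<le> R n" if "i < l" for i
        using path that unfolding is_path_def by auto
      define B where "B = 2 * a n * sqrt (u n / (1 - a n ^ 2 * u n))"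
      have eb: "vec_angle (p i) (p (Suc i)) \<le> B" if "i < l" for i
        unfolding B_def
        using that z g Rn nrm hd edge AU
        by (intro edge_bound[where \<zeta>=\<zeta> and \<gamma>=\<gamma> and Rn="R n"]) (auto simp: a_def u_def w_def)
      have nz: "p i \<noteq> 0" if "i \<le> l" for i
      proof -
        have "(1-\<gamma>) * R n > 0" using g Rn by simp
        then show ?thesis using hd[OF that] by (intro nonzero_of_hdist[of \<zeta>]) linarith
      qed
      have "vec_angle (p 0) (p l) \<le> real l * B"
        by (rule path_sum[where p=p and l=l and B=B, OF nz eb]) auto
      also have "\<dots> = (1 + eps n) * (2 * real l) * a n"
        unfolding B_def eps_def using True by simp
      finally show ?thesis unfolding goal_form .
    qed
  qed
qed


end
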